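(* Let $X$ be a finite connected simplicial complex, $\hat X$ its first barycentric subdivision, and $\delta$ a cellular perversity. Let $\hat\Delta,\hat\Delta'$ be simplices of $\hat X$ with $\hat\Delta$ a codimension-one face of $\hat\Delta'$, and suppose $\hat\Delta\subseteq{}^{-\delta}\Delta$ and $\hat\Delta'\subseteq{}^{-\delta}\Delta'$ for simplices $\Delta,\Delta'$ of $X$. Then $\Delta\leftrightarrow\Delta'$ and $\Delta\ge\Delta'$ in $\Lambda(X,\delta)$.
   Context: Simplices are open; $\Delta\leftrightarrow\Delta'$ means one is a face of the other. Cellular perversity: $\delta:\mathbb Z_{\ge0}\to\mathbb Z$, $\delta(0)=0$, bijective from each $\{0,\dots,k\}$ onto an interval $\{a,\dots,a+k\}$, $a\le0$; $\delta(\Delta)=\delta(\dim\Delta)$. A simplex $\hat\Delta$ of $\hat X$ has vertices the barycenters $c_0,\dots,c_s$ of simplices $\Delta_0,\dots,\Delta_s$ of $X$; $\max_{-\delta}\hat\Delta$ is the $c_i$ with $-\delta(\Delta_i)$ maximal; ${}^{-\delta}\Delta=\bigsqcup_{\max_{-\delta}\hat\Delta=c}\hat\Delta$ for $\Delta$ with barycenter $c$. $\Lambda(X,\delta)$: $\Delta\ge\Delta'$ iff there is a chain $\Delta=\Delta_0,\dots,\Delta_r=\Delta'$ ($r\ge0$) with $\Delta_i\leftrightarrow\Delta_{i+1}$, $\delta(\Delta_i)=\delta(\Delta_{i+1})+1$. *)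

theory Defs
  imports Main
begin

text \<open>A simplicial complex is given abstractly by its set of simplices,
each simplex being its (nonempty, finite) vertex set; open simplices of X correspond
bijectively to these vertex sets. A simplex of the barycentric subdivision is a nonempty
chain (w.r.t. strict inclusion) of simplices of X, the vertex c_i being the barycenter of
the simplex Delta_i, so we identify barycenters with the simplices themselves.\<close>

definition simplicial_complex :: "'a set set \<Rightarrow> bool" where
  "simplicial_complex X \<longleftrightarrow>
     (\<forall>s\<in>X. finite s \<and> s \<noteq> {}) \<and> (\<forall>s\<in>X. \<forall>t. t \<subseteq> s \<and> t \<noteq> {} \<longrightarrow> t \<in> X)"

definition complex_connected :: "'a set set \<Rightarrow> bool" where
  "complex_connected X \<longleftrightarrow> \<Union>X \<noteq> {} \<and>
     (\<forall>u\<in>\<Union>X. \<forall>v\<in>\<Union>X. (\<lambda>x y. {x, y} \<in> X)\<^sup>*\<^sup>* u v)"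

definition sdim :: "'a set \<Rightarrow> nat" where
  "sdim s = card s - 1"

definition incident :: "'a set \<Rightarrow> 'a set \<Rightarrow> bool" where
  "incident s t \<longleftrightarrow> s \<subseteq> t \<or> t \<subseteq> s"

definition cellular_perversity :: "(nat \<Rightarrow> int) \<Rightarrow> bool" where
  "cellular_perversity \<delta> \<longleftrightarrow> \<delta> 0 = 0 \<and>
     (\<forall>k. \<exists>a\<le>0. bij_betw \<delta> {0..k} {a..a + int k})"

definition bary_simplex :: "'a set set \<Rightarrow> 'a set set \<Rightarrow> bool" where
  "bary_simplex X c \<longleftrightarrow> c \<noteq> {} \<and> finite c \<and> c \<subseteq> X \<and>
     (\<forall>s\<in>c. \<forall>t\<in>c. s \<subseteq> t \<or> t \<subseteq> s)"

definition bary_codim1_face :: "'a set set \<Rightarrow> 'a set set \<Rightarrow> 'a set set \<Rightarrow> bool" where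
  "bary_codim1_face X c c' \<longleftrightarrow> bary_simplex X c \<and> bary_simplex X c' \<and>
     c \<subseteq> c' \<and> card c' = card c + 1"

definition max_neg_delta :: "(nat \<Rightarrow> int) \<Rightarrow> 'a set set \<Rightarrow> 'a set" where
  "max_neg_delta \<delta> c = (THE s. s \<in> c \<and> (\<forall>t\<in>c. - \<delta> (sdim t) \<le> - \<delta> (sdim s)))"

text \<open>The dual cell ^{-delta}Delta, as the set of (open) subdivision simplices forming it.
An open simplex of the subdivision is contained in this disjoint union iff it is one of them.\<close>
definition dual_cell :: "(nat \<Rightarrow> int) \<Rightarrow> 'a set set \<Rightarrow> 'a set \<Rightarrow> 'a set set set" where
  "dual_cell \<delta> X \<Delta> = {c. bary_simplex X c \<and> max_neg_delta \<delta> c = \<Delta>}"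

definition Lambda_ge :: "'a set set \<Rightarrow> (nat \<Rightarrow> int) \<Rightarrow> 'a set \<Rightarrow> 'a set \<Rightarrow> bool" where
  "Lambda_ge X \<delta> \<Delta> \<Delta>' \<longleftrightarrow>
     (\<lambda>s t. s \<in> X \<and> t \<in> X \<and> incident s t \<and> \<delta> (sdim s) = \<delta> (sdim t) + 1)\<^sup>*\<^sup>* \<Delta> \<Delta>'"

end

theory Submission
  imports Defs
begin

lemma delta_inj:
  assumes "cellular_perversity \<delta>" and "\<delta> m = \<delta> n" shows "m = n"
proof -
  obtain a where "bij_betw \<delta> {0..max m n} {a..a + int (max m n)}"
    using assms(1) unfolding cellular_perversity_def by blast
  hence "inj_on \<delta> {0..max m n}" by (simp add: bij_betw_def)
  thus ?thesis using assms(2) by (auto dest: inj_onD)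
qed

lemma subset_between:
  assumes "A \<subseteq> C" "finite C" "card A \<le> n" "n \<le> card C"
  shows "\<exists>V. A \<subseteq> V \<and> V \<subseteq> C \<and> card V = n"
proof -
  have fA: "finite A" using assms finite_subset by blast
  have "card (C - A) = card C - card A" using assms fA by (simp add: card_Diff_subset)
  then obtain T where T: "T \<subseteq> C - A" "card T = n - card A"
    using obtain_subset_with_card_n[of "n - card A" "C - A"] assms by force
  have fT: "finite T" using T assms finite_subset by (meson finite_Diff)
  have "card (A \<union> T) = card A + card T"
    using T fA fT by (subst card_Un_disjoint) auto
  thus ?thesis using T assms by (rule_tac x="A \<union> T" in exI) auto
qed

lemma find_v:
  assumes "finite B" "t \<subseteq> B" "u \<subseteq> B" "t \<subseteq> u \<or> u \<subseteq> t" "d + 1 \<le> card B"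
  shows "\<exists>v. v \<subseteq> B \<and> card v = d + 1 \<and> incident t v \<and> incident v u"
proof -
  let ?lo = "t \<inter> u" and ?hi = "t \<union> u"
  have lohi: "?lo \<subseteq> t" "?lo \<subseteq> u" "t \<subseteq> ?hi" "u \<subseteq> ?hi" "?hi \<subseteq> B" "?lo \<subseteq> ?hi"
    using assms by auto
  have ftu: "finite t" "finite u" using assms(1,2,3) finite_subset by blast+
  hence fin: "finite ?hi" "finite ?lo" by auto
  have ch: "card ?lo \<le> card ?hi" "card ?hi \<le> card B"
    using card_mono[OF fin(1) lohi(6)] card_mono[OF assms(1) lohi(5)] by auto
  consider "d + 1 < card ?lo" | "card ?lo \<le> d + 1 \<and> d + 1 \<le> card ?hi" | "card ?hi < d + 1"
    by linarith
  then obtain v where v: "v \<subseteq> B" "card v = d + 1" "v \<subseteq> ?lo \<or> (?lo \<subseteq> v \<and> v \<subseteq> ?hi) \<or> ?hi \<subseteq> v"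
  proof cases
    case 1
    then obtain v where "{} \<subseteq> v" "v \<subseteq> ?lo" "card v = d + 1"
      using subset_between[of "{}" ?lo "d+1"] fin by auto
    hence "v \<subseteq> B \<and> card v = d + 1 \<and> (v \<subseteq> ?lo \<or> (?lo \<subseteq> v \<and> v \<subseteq> ?hi) \<or> ?hi \<subseteq> v)"
      using lohi assms by blast
    thus ?thesis using that by blast
  next
    case 2
    then obtain v where "?lo \<subseteq> v" "v \<subseteq> ?hi" "card v = d + 1"
      using subset_between[of ?lo ?hi "d+1"] fin lohi by auto
    hence "v \<subseteq> B \<and> card v = d + 1 \<and> (v \<subseteq> ?lo \<or> (?lo \<subseteq> v \<and> v \<subseteq> ?hi) \<or> ?hi \<subseteq> v)"
      using lohi assms by blast
    thus ?thesis using that by blast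
  next
    case 3
    then obtain v where "?hi \<subseteq> v" "v \<subseteq> B" "card v = d + 1"
      using subset_between[of ?hi B "d+1"] assms lohi by auto
    hence "v \<subseteq> B \<and> card v = d + 1 \<and> (v \<subseteq> ?lo \<or> (?lo \<subseteq> v \<and> v \<subseteq> ?hi) \<or> ?hi \<subseteq> v)"
      using lohi assms by blast
    thus ?thesis using that by blast
  qed
  have "incident t v \<and> incident v u" using v(3) assms(4) unfolding incident_def by auto
  thus ?thesis using v by blast
qed

lemma card_eq_from_sdim:
  assumes "finite t" "finite u" "t \<noteq> {}" "u \<noteq> {}" "sdim t = sdim u"
  shows "card t = card u"
proof -
  have "card t > 0" "card u > 0" using assms by auto
  thus ?thesis using assms(5) unfolding sdim_def by arith
qed

lemma eq_from_card:
  assumes "finite t" "finite u" "card t = card u" "t \<subseteq> u \<or> u \<subseteq> t"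
  shows "t = u"
  using assms(4)
proof
  assume "t \<subseteq> u" thus ?thesis using card_subset_eq[OF assms(2)] assms(3) by blast
next
  assume "u \<subseteq> t" thus ?thesis using card_subset_eq[OF assms(1)] assms(3) by auto
qed

lemma chain_lemma:
  assumes sc: "simplicial_complex X" and cp: "cellular_perversity \<delta>" and BX: "B \<in> X"
    and uB: "u \<subseteq> B" and une: "u \<noteq> {}"
  shows "\<forall>t. n = nat (\<delta> (sdim t) - \<delta> (sdim u)) \<longrightarrow> \<delta> (sdim u) \<le> \<delta> (sdim t) \<longrightarrow>
     t \<subseteq> B \<longrightarrow> t \<noteq> {} \<longrightarrow> (t \<subseteq> u \<or> u \<subseteq> t) \<longrightarrow> Lambda_ge X \<delta> t u"
proof -
  have finB: "finite B" using sc BX unfolding simplicial_complex_def by blast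
  have fu: "finite u" using finB uB finite_subset by blast
  obtain a where bij: "bij_betw \<delta> {0..sdim B} {a..a + int (sdim B)}"
    using cp unfolding cellular_perversity_def by blast
  have cB: "card B \<ge> 1" using finB uB une card_mono[OF finB uB]
    by (metis One_nat_def Suc_leI card_gt_0_iff le_trans subset_empty)
  show ?thesis
  proof (induction n)
    case 0
    show ?case
    proof (intro allI impI)
      fix t assume h: "0 = nat (\<delta> (sdim t) - \<delta> (sdim u))" "\<delta> (sdim u) \<le> \<delta> (sdim t)"
        "t \<subseteq> B" "t \<noteq> {}" "t \<subseteq> u \<or> u \<subseteq> t"
      have ft: "finite t" using finB h(3) finite_subset by blast
      have "\<delta> (sdim t) = \<delta> (sdim u)" using h(1,2) by simp
      hence "sdim t = sdim u" using delta_inj cp by blast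
      hence "card t = card u" using card_eq_from_sdim ft fu h(4) une by blast
      hence "t = u" using eq_from_card ft fu h(5) by blast
      thus "Lambda_ge X \<delta> t u" unfolding Lambda_ge_def by simp
    qed
  next
    case (Suc n)
    show ?case
    proof (intro allI impI)
      fix t assume h: "Suc n = nat (\<delta> (sdim t) - \<delta> (sdim u))" "\<delta> (sdim u) \<le> \<delta> (sdim t)"
        "t \<subseteq> B" "t \<noteq> {}" "t \<subseteq> u \<or> u \<subseteq> t"
      have "sdim u \<le> sdim B" "sdim t \<le> sdim B"
        using card_mono[OF finB uB] card_mono[OF finB h(3)] unfolding sdim_def by auto
      hence "sdim u \<in> {0..sdim B}" "sdim t \<in> {0..sdim B}" by auto
      hence "\<delta> (sdim u) \<in> {a..a + int (sdim B)}" "\<delta> (sdim t) \<in> {a..a + int (sdim B)}"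
        using bij unfolding bij_betw_def by blast+
      hence "\<delta> (sdim t) - 1 \<in> {a..a + int (sdim B)}" using h(1,2) by auto
      hence "\<delta> (sdim t) - 1 \<in> \<delta> ` {0..sdim B}" using bij unfolding bij_betw_def by simp
      then obtain d where d: "d \<in> {0..sdim B}" "\<delta> d = \<delta> (sdim t) - 1" by force
      have "d + 1 \<le> card B" using d cB unfolding sdim_def by auto
      then obtain v where v: "v \<subseteq> B" "card v = d + 1" "incident t v" "incident v u"
        using find_v[OF finB h(3) uB h(5)] by blast
      have vne: "v \<noteq> {}" using v by auto
      have sv: "sdim v = d" using v unfolding sdim_def by simp
      have "n = nat (\<delta> (sdim v) - \<delta> (sdim u))" "\<delta> (sdim u) \<le> \<delta> (sdim v)"
        using h(1,2) d sv by auto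
      moreover have "v \<subseteq> u \<or> u \<subseteq> v" using v(4) unfolding incident_def by blast
      ultimately have IH: "Lambda_ge X \<delta> v u" using Suc.IH v(1) vne by blast
      have tX: "t \<in> X" "v \<in> X" using sc BX h(3,4) v(1) vne unfolding simplicial_complex_def by blast+
      have st: "\<delta> (sdim t) = \<delta> (sdim v) + 1" using d sv by simp
      show "Lambda_ge X \<delta> t u" using IH unfolding Lambda_ge_def
        by (rule converse_rtranclp_into_rtranclp[rotated]) (use tX v(3) st in blast)
    qed
  qed
qed

lemma max_prop:
  assumes sc: "simplicial_complex X" and cp: "cellular_perversity \<delta>"
    and bs: "bary_simplex X c"
  shows "max_neg_delta \<delta> c \<in> c \<and> (\<forall>t\<in>c. \<delta> (sdim (max_neg_delta \<delta> c)) \<le> \<delta> (sdim t))"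
proof -
  let ?f = "\<lambda>t. \<delta> (sdim t)"
  have fc: "finite c" "c \<noteq> {}" using bs unfolding bary_simplex_def by auto
  have "Min (?f ` c) \<in> ?f ` c" using fc by simp
  then obtain s where s: "s \<in> c" "?f s = Min (?f ` c)" by auto
  have smin: "\<forall>t\<in>c. ?f s \<le> ?f t" using s(2) fc Min_le by (metis finite_imageI image_eqI)
  have uniq: "s' = s" if "s' \<in> c" "\<forall>t\<in>c. - ?f t \<le> - ?f s'" for s'
  proof -
    have "?f s' \<le> ?f s" using that(2) s(1) by auto
    moreover have "?f s \<le> ?f s'" using smin that(1) by blast
    ultimately have "?f s' = ?f s" by simp
    hence "sdim s' = sdim s" using delta_inj cp by blast
    moreover have "s \<in> X" "s' \<in> X" using bs s that unfolding bary_simplex_def by auto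
    hence "finite s" "finite s'" "s \<noteq> {}" "s' \<noteq> {}" using sc unfolding simplicial_complex_def by blast+
    ultimately have "card s' = card s" using card_eq_from_sdim by blast
    moreover have "s \<subseteq> s' \<or> s' \<subseteq> s" using bs s that unfolding bary_simplex_def by auto
    ultimately show ?thesis using \<open>finite s\<close> \<open>finite s'\<close> eq_from_card by blast
  qed
  have "max_neg_delta \<delta> c = s" unfolding max_neg_delta_def
  proof (rule the_equality)
    show "s \<in> c \<and> (\<forall>t\<in>c. - ?f t \<le> - ?f s)" using s(1) smin by simp
  next
    fix s' assume "s' \<in> c \<and> (\<forall>t\<in>c. - ?f t \<le> - ?f s')"
    thus "s' = s" using uniq by blast
  qed
  thus ?thesis using s smin by simp
qed

theorem lemma3p2p2:
  fixes X :: "'a set set" and \<delta> :: "nat \<Rightarrow> int"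
    and c c' :: "'a set set" and \<Delta> \<Delta>' :: "'a set"
  assumes "simplicial_complex X" and "finite X" and "complex_connected X"
    and "cellular_perversity \<delta>"
    and "bary_codim1_face X c c'"
    and "\<Delta> \<in> X" and "\<Delta>' \<in> X"
    and "c \<in> dual_cell \<delta> X \<Delta>" and "c' \<in> dual_cell \<delta> X \<Delta>'"
  shows "incident \<Delta> \<Delta>' \<and> Lambda_ge X \<delta> \<Delta> \<Delta>'"
proof -
  have bs: "bary_simplex X c" "bary_simplex X c'" "c \<subseteq> c'"
    using assms(5) unfolding bary_codim1_face_def by auto
  have m1: "\<Delta> \<in> c" "\<forall>t\<in>c. \<delta> (sdim \<Delta>) \<le> \<delta> (sdim t)"
    using max_prop[OF assms(1,4) bs(1)] assms(8) unfolding dual_cell_def by auto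
  have m2: "\<Delta>' \<in> c'" "\<forall>t\<in>c'. \<delta> (sdim \<Delta>') \<le> \<delta> (sdim t)"
    using max_prop[OF assms(1,4) bs(2)] assms(9) unfolding dual_cell_def by auto
  have "\<forall>s\<in>c'. \<forall>t\<in>c'. s \<subseteq> t \<or> t \<subseteq> s" using bs(2) unfolding bary_simplex_def by blast
  moreover have "\<Delta> \<in> c'" using bs(3) m1(1) by blast
  ultimately have inc: "\<Delta> \<subseteq> \<Delta>' \<or> \<Delta>' \<subseteq> \<Delta>" using m2(1) by blast
  have le: "\<delta> (sdim \<Delta>') \<le> \<delta> (sdim \<Delta>)" using m2(2) \<open>\<Delta> \<in> c'\<close> by blast
  have ne: "\<Delta> \<noteq> {}" "\<Delta>' \<noteq> {}" using assms(1,6,7) unfolding simplicial_complex_def by blast+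
  have BX: "\<Delta> \<union> \<Delta>' \<in> X" using inc assms(6,7) by (auto simp: sup.absorb1 sup.absorb2)
  have "Lambda_ge X \<delta> \<Delta> \<Delta>'"
    using chain_lemma[OF assms(1,4) BX _ ne(2), of "nat (\<delta> (sdim \<Delta>) - \<delta> (sdim \<Delta>'))"] le ne inc by blast
  thus ?thesis using inc unfolding incident_def by blast
qed

end
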